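(* Fix $0<q<1$. For every $G\in\mathcal G$ with $G\ne E$, the equation $\bar G(t)=\frac1q\bar E(t)$ has a unique solution $t\in[0,\infty)$; this solution equals $T_q(G)$.
   Context: $E(t)=1-e^{-t}$ is the standard exponential cdf, $\bar E=1-E$, $\bar G=1-G$. $\mathcal G=\{E\#F:F$ a probability distribution on $[1,\infty)\}$, where $(E\#F)(t)=\int E(t/\mu)\,dF(\mu)$ (scale mixtures of exponentials with scales $\ge1$). FDR functional: $T_q(G)=\inf\{t:\bar G(t)\ge\frac1q\bar E(t)\}$. *)

theory Defs
  imports "HOL-Probability.Probability"
begin

definition Ecdf :: "real \<Rightarrow> real" where
  "Ecdf t = (if t < 0 then 0 else 1 - exp (- t))"

definition Ebar :: "real \<Rightarrow> real" where
  "Ebar t = 1 - Ecdf t"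

definition scale_mix :: "real measure \<Rightarrow> real \<Rightarrow> real" where
  "scale_mix F t = (\<integral>\<mu>. Ecdf (t / \<mu>) \<partial>F)"

definition mixG :: "(real \<Rightarrow> real) set" where
  "mixG = {scale_mix F | F. prob_space F \<and> sets F = sets borel \<and> emeasure F {1..} = 1}"

definition survival :: "(real \<Rightarrow> real) \<Rightarrow> real \<Rightarrow> real" where
  "survival G t = 1 - G t"

definition Tq :: "real \<Rightarrow> (real \<Rightarrow> real) \<Rightarrow> real" where
  "Tq q G = Inf {t. survival G t \<ge> (1 / q) * Ebar t}"

end

theory Submission
  imports Defs
begin

lemma key:
  fixes q :: real and F :: "real measure"
  assumes q: "0 < q" "q < 1"
    and F: "prob_space F" "sets F = sets borel" "emeasure F {1..} = 1"
    and GF: "scale_mix F \<noteq> Ecdf"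
  shows "(\<exists>!t. t \<ge> 0 \<and> survival (scale_mix F) t = (1 / q) * Ebar t) \<and>
         (\<forall>t. t \<ge> 0 \<and> survival (scale_mix F) t = (1 / q) * Ebar t \<longrightarrow> t = Tq q (scale_mix F))"
proof -
  interpret prob_space F by fact
  define G where "G = scale_mix F"
  have meas: "f \<in> borel_measurable F" if "f \<in> borel_measurable borel" for f :: "real \<Rightarrow> real"
    by (subst measurable_cong_sets[OF F(2) refl]) (rule that)
  have "prob {1..} = 1" using F(3) by (simp add: emeasure_eq_measure)
  then have AE1: "AE \<mu> in F. 1 \<le> \<mu>" using AE_prob_1[of "{1..}"] by (auto elim: eventually_mono)
  define h where "h t = (\<integral>\<mu>. exp (t * (1 - 1/\<mu>)) \<partial>F)" for t
  have cbd: "0 \<le> 1 - 1/\<mu> \<and> 1 - 1/\<mu> \<le> 1" if "1 \<le> \<mu>" for \<mu> :: real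
    using that by (auto simp: field_simps)
  have int_h: "integrable F (\<lambda>\<mu>. exp (t * (1 - 1/\<mu>)))" for t
  proof (rule integrable_const_bound[where B="exp \<bar>t\<bar>"])
    show "AE \<mu> in F. norm (exp (t * (1 - 1/\<mu>))) \<le> exp \<bar>t\<bar>"
      using AE1
    proof eventually_elim
      case (elim \<mu>)
      from cbd[OF elim] have "t * (1 - 1/\<mu>) \<le> \<bar>t\<bar>"
        by (smt (verit) mult_left_le mult_nonneg_nonneg mult_nonpos_nonneg)
      then show ?case by simp
    qed
    show "(\<lambda>\<mu>. exp (t * (1 - 1/\<mu>))) \<in> borel_measurable F" by (intro meas) measurable
  qed
  have int_c: "integrable F (\<lambda>\<mu>. 1 - 1/\<mu>)"
  proof (rule integrable_const_bound[where B="1"])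
    show "AE \<mu> in F. norm (1 - 1/\<mu>) \<le> 1" using AE1 by eventually_elim (use cbd in auto)
    show "(\<lambda>\<mu>. 1 - 1/\<mu>) \<in> borel_measurable F" by (intro meas) measurable
  qed
  have Ecdf_meas: "(\<lambda>\<mu>. Ecdf (t / \<mu>)) \<in> borel_measurable F" for t
    unfolding Ecdf_def by (intro meas) measurable
  have int_E: "integrable F (\<lambda>\<mu>. Ecdf (t / \<mu>))" for t
  proof (rule integrable_const_bound[where B="1"])
    show "AE \<mu> in F. norm (Ecdf (t / \<mu>)) \<le> 1" by (auto simp: Ecdf_def)
  qed (rule Ecdf_meas)
  have surv: "survival G t = exp (-t) * h t" if "t \<ge> 0" for t
  proof -
    have "survival G t = (\<integral>\<mu>. (1 - Ecdf (t / \<mu>)) \<partial>F)"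
      unfolding survival_def G_def scale_mix_def
      using int_E[of t] by (simp add: prob_space)
    also have "\<dots> = (\<integral>\<mu>. exp (-t) * exp (t * (1 - 1/\<mu>)) \<partial>F)"
    proof (rule integral_cong_AE)
      show "(\<lambda>\<mu>. 1 - Ecdf (t / \<mu>)) \<in> borel_measurable F" using Ecdf_meas by measurable
      show "(\<lambda>\<mu>. exp (-t) * exp (t * (1 - 1/\<mu>))) \<in> borel_measurable F" by (intro meas) measurable
      show "AE \<mu> in F. 1 - Ecdf (t / \<mu>) = exp (-t) * exp (t * (1 - 1/\<mu>))"
        using AE1
      proof eventually_elim
        case (elim \<mu>)
        then have "\<not> t / \<mu> < 0" using that by (simp add: not_less)
        then have "1 - Ecdf (t / \<mu>) = exp (- (t/\<mu>))" by (simp add: Ecdf_def)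
        also have "\<dots> = exp (-t + t * (1 - 1/\<mu>))" by (simp add: algebra_simps)
        also have "\<dots> = exp (-t) * exp (t * (1 - 1/\<mu>))" by (rule exp_add)
        finally show ?case .
      qed
    qed
    also have "\<dots> = exp (-t) * h t" unfolding h_def by simp
    finally show ?thesis .
  qed
  have neg: "survival G t = 1" if "t < 0" for t
  proof -
    have "(\<integral>\<mu>. Ecdf (t / \<mu>) \<partial>F) = (\<integral>\<mu>. 0 \<partial>F)"
    proof (rule integral_cong_AE)
      show "AE \<mu> in F. Ecdf (t / \<mu>) = 0" using AE1
        by eventually_elim (use that in \<open>auto simp: Ecdf_def divide_neg_pos\<close>)
    qed (use Ecdf_meas in auto)
    then show ?thesis unfolding survival_def G_def scale_mix_def by simp
  qed
  have Eb_pos: "Ebar t = exp (-t)" if "t \<ge> 0" for t using that by (simp add: Ebar_def Ecdf_def)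
  have Eb_neg: "Ebar t = 1" if "t < 0" for t using that by (simp add: Ebar_def Ecdf_def)
  have pos: "emeasure F {1<..} \<noteq> 0"
  proof
    assume 0: "emeasure F {1<..} = 0"
    have "{1<..} \<in> null_sets F" using 0 F(2) by (auto simp: null_sets_def)
    then have "AE \<mu> in F. \<mu> \<notin> {1<..}" by (rule AE_not_in)
    with AE1 have AEeq: "AE \<mu> in F. \<mu> = 1" by eventually_elim auto
    have "G t = Ecdf t" for t
    proof -
      have "G t = (\<integral>\<mu>. Ecdf t \<partial>F)" unfolding G_def scale_mix_def
        by (rule integral_cong_AE) (use Ecdf_meas AEeq in \<open>auto elim: eventually_mono\<close>)
      then show ?thesis by (simp add: prob_space)
    qed
    then show False using GF G_def by auto
  qed
  have A_sets: "{1<..} \<in> sets F" using F(2) by simp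
  have mono: "h s < h t" if "0 \<le> s" "s < t" for s t
    unfolding h_def
  proof (rule integral_less_AE[OF int_h int_h pos A_sets])
    show "AE \<mu> in F. \<mu> \<in> {1<..} \<longrightarrow> exp (s * (1 - 1/\<mu>)) \<noteq> exp (t * (1 - 1/\<mu>))"
    proof (rule AE_I2, rule impI)
      fix \<mu> :: real assume "\<mu> \<in> {1<..}"
      then have "0 < 1 - 1/\<mu>" by (simp add: field_simps)
      then have "s * (1 - 1/\<mu>) < t * (1 - 1/\<mu>)" using that by simp
      then show "exp (s * (1 - 1/\<mu>)) \<noteq> exp (t * (1 - 1/\<mu>))" by (metis exp_less_cancel_iff less_irrefl)
    qed
    show "AE \<mu> in F. exp (s * (1 - 1/\<mu>)) \<le> exp (t * (1 - 1/\<mu>))" using AE1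
    proof eventually_elim
      case (elim \<mu>)
      then show ?case using cbd[OF elim] that by (simp add: mult_right_mono)
    qed
  qed
  have lip: "h t - h s \<le> exp t - exp s" if "0 \<le> s" "s \<le> t" for s t
  proof -
    have "h t - h s = (\<integral>\<mu>. exp (t * (1 - 1/\<mu>)) - exp (s * (1 - 1/\<mu>)) \<partial>F)"
      unfolding h_def using int_h by simp
    also have "\<dots> \<le> (\<integral>\<mu>. exp t - exp s \<partial>F)"
    proof (rule integral_mono_AE)
      show "AE \<mu> in F. exp (t * (1 - 1/\<mu>)) - exp (s * (1 - 1/\<mu>)) \<le> exp t - exp s" using AE1
      proof eventually_elim
        case (elim \<mu>)
        define c where "c = 1 - 1/\<mu>"
        have c: "0 \<le> c" "c \<le> 1" using cbd[OF elim] c_def by auto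
        have "exp (t * c) - exp (s * c) = exp (s*c) * (exp ((t-s)*c) - 1)"
          by (simp add: algebra_simps flip: exp_add)
        also have "\<dots> \<le> exp s * (exp (t-s) - 1)"
        proof (rule mult_mono)
          show "exp (s*c) \<le> exp s" using c that by (simp add: mult_left_le)
          show "exp ((t-s)*c) - 1 \<le> exp (t-s) - 1" using c that by (simp add: mult_left_le)
          show "0 \<le> exp ((t - s) * c) - 1" using c that by simp
        qed simp
        also have "\<dots> = exp t - exp s" by (simp add: algebra_simps flip: exp_add)
        finally show ?case by (simp add: c_def)
      qed
    qed (use int_h in auto)
    also have "\<dots> = exp t - exp s" by (simp add: prob_space)
    finally show ?thesis .
  qed
  define m where "m = (\<integral>\<mu>. 1 - 1/\<mu> \<partial>F)"
  have mpos: "0 < m"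
  proof -
    have "(\<integral>\<mu>. 0 \<partial>F) < m" unfolding m_def
    proof (rule integral_less_AE[OF _ int_c pos A_sets])
      show "AE \<mu> in F. \<mu> \<in> {1<..} \<longrightarrow> 0 \<noteq> 1 - 1/\<mu>" by (rule AE_I2) auto
      show "AE \<mu> in F. 0 \<le> 1 - 1/\<mu>" using AE1 by eventually_elim (use cbd in auto)
    qed simp
    then show ?thesis by simp
  qed
  have grow: "1 + t * m \<le> h t" if "0 \<le> t" for t
  proof -
    have "1 + t * m = (\<integral>\<mu>. 1 + t * (1 - 1/\<mu>) \<partial>F)"
      unfolding m_def using int_c by (simp add: prob_space)
    also have "\<dots> \<le> h t" unfolding h_def
      by (rule integral_mono_AE) (use int_c int_h in \<open>auto simp: exp_ge_add_one_self\<close>)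
    finally show ?thesis .
  qed
  have h0: "h 0 = 1" by (simp add: h_def prob_space)
  define T where "T = (1/q - 1) / m"
  have T0: "0 \<le> T" using q mpos by (simp add: T_def field_simps)
  have hT: "1/q \<le> h T" using grow[OF T0] mpos by (simp add: T_def)
  have cont: "continuous_on {0..T} h"
  proof (clarsimp simp: continuous_on_def)
    fix x assume x: "0 \<le> x" "x \<le> T"
    have "((\<lambda>t. h t - h x) \<longlongrightarrow> 0) (at x within {0..T})"
    proof (rule Lim_null_comparison)
      have pw: "norm (h t - h x) \<le> \<bar>exp t - exp x\<bar>" if "t \<in> {0..T}" for t
      proof (cases "x \<le> t")
        case True
        then show ?thesis using lip[of x t] mono[of x t] x by (cases "x = t") auto
      next
        case False
        then show ?thesis using lip[of t x] mono[of t x] x that by auto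
      qed
      show "\<forall>\<^sub>F t in at x within {0..T}. norm (h t - h x) \<le> \<bar>exp t - exp x\<bar>"
        unfolding eventually_at_filter by (rule always_eventually) (use pw in auto)
      have "((\<lambda>t. exp t - exp x) \<longlongrightarrow> 0) (at x within {0..T})"
        by (rule LIM_zero) (intro tendsto_intros)
      then show "((\<lambda>t. \<bar>exp t - exp x\<bar>) \<longlongrightarrow> 0) (at x within {0..T})"
        using tendsto_rabs by fastforce
    qed
    then show "(h \<longlongrightarrow> h x) (at x within {0..T})" by (simp add: LIM_zero_iff)
  qed
  obtain t0 where t0: "0 \<le> t0" "t0 \<le> T" "h t0 = 1/q"
    using IVT'[of h 0 "1/q" T, OF _ hT T0 cont] h0 q by auto
  have eqv: "(t \<ge> 0 \<and> survival G t = (1 / q) * Ebar t) \<longleftrightarrow> t = t0" for t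
  proof
    assume a: "t \<ge> 0 \<and> survival G t = (1 / q) * Ebar t"
    then have "exp (-t) * h t = exp (-t) * (1/q)" using surv Eb_pos by auto
    then have "h t = 1/q" by (metis exp_not_eq_zero mult_cancel_left)
    then show "t = t0" using mono[of t t0] mono[of t0 t] t0 a by (metis linorder_neq_iff less_irrefl)
  next
    assume "t = t0" then show "t \<ge> 0 \<and> survival G t = (1 / q) * Ebar t"
      using surv Eb_pos t0 by auto
  qed
  have Sset: "{t. survival G t \<ge> (1 / q) * Ebar t} = {t0..}"
  proof (intro set_eqI iffI)
    fix t assume "t \<in> {t. survival G t \<ge> (1 / q) * Ebar t}"
    then have a: "survival G t \<ge> (1 / q) * Ebar t" by simp
    have "t \<ge> 0"
    proof (rule ccontr)
      assume "\<not> 0 \<le> t"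
      then show False using a neg Eb_neg q by (auto simp: field_simps)
    qed
    then have "exp (-t) * (1/q) \<le> exp (-t) * h t" using a surv Eb_pos by (auto simp: mult.commute)
    then have "h t \<ge> 1/q" by (metis exp_gt_zero mult_le_cancel_left_pos)
    then show "t \<in> {t0..}" using mono[of t t0] t0 \<open>t \<ge> 0\<close> by force
  next
    fix t assume "t \<in> {t0..}"
    then have "t \<ge> t0" by simp
    then have "h t \<ge> 1/q" using mono[of t0 t] t0 by (cases "t = t0") auto
    then have "exp (-t) * (1/q) \<le> exp (-t) * h t" by (rule mult_left_mono) simp_all
    then show "t \<in> {t. survival G t \<ge> (1 / q) * Ebar t}"
      using surv Eb_pos t0 \<open>t \<ge> t0\<close> by (auto simp: mult.commute)
  qed
  have "Tq q G = t0" unfolding Tq_def Sset by simp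
  then show ?thesis using eqv unfolding G_def[symmetric] by auto
qed

theorem lemma4p1:
  fixes q :: real and G :: "real \<Rightarrow> real"
  assumes "0 < q" and "q < 1"
    and "G \<in> mixG" and "G \<noteq> Ecdf"
  shows "(\<exists>!t. t \<ge> 0 \<and> survival G t = (1 / q) * Ebar t) \<and>
         (\<forall>t. t \<ge> 0 \<and> survival G t = (1 / q) * Ebar t \<longrightarrow> t = Tq q G)"
proof -
  obtain F where F: "G = scale_mix F" "prob_space F" "sets F = sets borel" "emeasure F {1..} = 1"
    using assms(3) unfolding mixG_def by auto
  show ?thesis using key[OF assms(1,2) F(2-4)] F(1) assms(4) by simp
qed

end
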